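(* For $n\ge 0$ let $U_n \equiv \mathbf{B}Y_0\mathbf{S}\cdots\mathbf{S}\mathbf{I}$ with exactly $n$ copies of $\mathbf{S}$ (the Scott sequence). Then $U_n \neq_\beta U_m$ for all $n\neq m$.
   Context: Untyped $\lambda$-calculus modulo $\alpha$; application associates to the left. $\mathbf{I}\equiv\lambda x.x$, $\mathbf{S}\equiv\lambda xyz.\,xz(yz)$, $\mathbf{B}\equiv\lambda xyz.\,x(yz)$, and $Y_0\equiv\lambda f.\,\omega_f\omega_f$ with $\omega_f\equiv\lambda x.\,f(xx)$ (Curry's fixed point combinator). *)

theory Defs
  imports Main
begin

datatype dB = Var nat | App dB dB | Abs dB

primrec lift :: "dB \<Rightarrow> nat \<Rightarrow> dB" where
  "lift (Var i) k = (if i < k then Var i else Var (Suc i))"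
| "lift (App s t) k = App (lift s k) (lift t k)"
| "lift (Abs s) k = Abs (lift s (Suc k))"

primrec subst :: "dB \<Rightarrow> dB \<Rightarrow> nat \<Rightarrow> dB" where
  "subst (Var i) s k = (if k < i then Var (i - 1) else if i = k then s else Var i)"
| "subst (App t u) s k = App (subst t s k) (subst u s k)"
| "subst (Abs t) s k = Abs (subst t (lift s 0) (Suc k))"

inductive beta :: "dB \<Rightarrow> dB \<Rightarrow> bool" where
  beta_rule: "beta (App (Abs s) t) (subst s t 0)"
| appL: "beta s t \<Longrightarrow> beta (App s u) (App t u)"
| appR: "beta s t \<Longrightarrow> beta (App u s) (App u t)"
| abs: "beta s t \<Longrightarrow> beta (Abs s) (Abs t)"

definition beta_eq :: "dB \<Rightarrow> dB \<Rightarrow> bool" where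
  "beta_eq = equivclp beta"

definition combI :: dB where "combI = Abs (Var 0)"
definition combS :: dB where
  "combS = Abs (Abs (Abs (App (App (Var 2) (Var 0)) (App (Var 1) (Var 0)))))"
definition combB :: dB where
  "combB = Abs (Abs (Abs (App (Var 2) (App (Var 1) (Var 0)))))"
text \<open>Curry's fixed point combinator Y0 = \<lambda>f. (\<lambda>x. f(xx)) (\<lambda>x. f(xx)).\<close>
definition combY0 :: dB where
  "combY0 = Abs (App (Abs (App (Var 1) (App (Var 0) (Var 0))))
                     (Abs (App (Var 1) (App (Var 0) (Var 0)))))"

primrec scott_pre :: "nat \<Rightarrow> dB" where
  "scott_pre 0 = App combB combY0"
| "scott_pre (Suc n) = App (scott_pre n) combS"

definition scottU :: "nat \<Rightarrow> dB" where
  "scottU n = App (scott_pre n) combI"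

end

theory Submission
  imports Defs
begin

lemma subst_Var: "subst (Var i) s k = (if k < i then Var (i - 1) else if i = k then s else Var i)"
  by simp

lemma lift_lift:
  "i < k + 1 \<Longrightarrow> lift (lift t i) (Suc k) = lift (lift t k) i"
  by (induct t arbitrary: i k) auto

lemma lift_subst [simp]:
  "j < i + 1 \<Longrightarrow> lift (subst t s j) i = subst (lift t (i + 1)) (lift s i) j"
  by (induct t arbitrary: i j s)
    (simp_all add: diff_Suc lift_lift split: nat.split)

lemma lift_subst_lt:
  "i < j + 1 \<Longrightarrow> lift (subst t s j) i = subst (lift t i) (lift s i) (j + 1)"
  by (induct t arbitrary: i j s) (auto simp add: lift_lift)

lemma subst_lift [simp]: "subst (lift t k) s k = t"
  by (induct t arbitrary: k s) simp_all

lemma subst_subst: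
  "i < j + 1 \<Longrightarrow> subst (subst t (lift v i) (Suc j)) (subst u v j) i = subst (subst t u i) v j"
  by (induct t arbitrary: i j u v)
    (simp_all add: diff_Suc lift_lift [symmetric] lift_subst_lt split: nat.split)

inductive par_beta :: "dB \<Rightarrow> dB \<Rightarrow> bool"  (infixl "\<Rightarrow>\<^sub>p" 50) where
  var [simp, intro!]: "Var n \<Rightarrow>\<^sub>p Var n"
| abs [simp, intro!]: "s \<Rightarrow>\<^sub>p t \<Longrightarrow> Abs s \<Rightarrow>\<^sub>p Abs t"
| app [simp, intro!]: "s \<Rightarrow>\<^sub>p s' \<Longrightarrow> t \<Rightarrow>\<^sub>p t' \<Longrightarrow> App s t \<Rightarrow>\<^sub>p App s' t'"
| beta [simp, intro!]: "s \<Rightarrow>\<^sub>p s' \<Longrightarrow> t \<Rightarrow>\<^sub>p t' \<Longrightarrow> App (Abs s) t \<Rightarrow>\<^sub>p subst s' t' 0"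

inductive_cases par_beta_cases [elim!]:
  "Var n \<Rightarrow>\<^sub>p t"
  "Abs s \<Rightarrow>\<^sub>p Abs t"
  "Abs s \<Rightarrow>\<^sub>p t"
  "App s t \<Rightarrow>\<^sub>p u"

lemma par_beta_varL [simp]: "(Var n \<Rightarrow>\<^sub>p t) = (t = Var n)"
  by blast

lemma par_beta_refl [simp]: "t \<Rightarrow>\<^sub>p t"
  by (induct t) simp_all

lemma beta_subset_par_beta: "beta s t \<Longrightarrow> s \<Rightarrow>\<^sub>p t"
  by (induct rule: beta.induct) auto

lemma rtr_beta_App:
  "beta\<^sup>*\<^sup>* s s' \<Longrightarrow> beta\<^sup>*\<^sup>* t t' \<Longrightarrow> beta\<^sup>*\<^sup>* (App s t) (App s' t')"
proof -
  assume a: "beta\<^sup>*\<^sup>* s s'" and b: "beta\<^sup>*\<^sup>* t t'"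
  from a have "beta\<^sup>*\<^sup>* (App s t) (App s' t)"
    by induct (auto intro: rtranclp.rtrancl_into_rtrancl beta.appL)
  moreover from b have "beta\<^sup>*\<^sup>* (App s' t) (App s' t')"
    by induct (auto intro: rtranclp.rtrancl_into_rtrancl beta.appR)
  ultimately show ?thesis by simp
qed

lemma rtr_beta_Abs: "beta\<^sup>*\<^sup>* s s' \<Longrightarrow> beta\<^sup>*\<^sup>* (Abs s) (Abs s')"
  by (induct rule: rtranclp.induct) (auto intro: rtranclp.rtrancl_into_rtrancl beta.abs)

lemma par_beta_subset_beta: "s \<Rightarrow>\<^sub>p t \<Longrightarrow> beta\<^sup>*\<^sup>* s t"
proof (induct rule: par_beta.induct)
  case (beta s s' t t')
  then have "beta\<^sup>*\<^sup>* (App (Abs s) t) (App (Abs s') t')"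
    by (simp add: rtr_beta_App rtr_beta_Abs)
  then show ?case by (auto intro: rtranclp.rtrancl_into_rtrancl beta.beta_rule)
qed (auto intro: rtr_beta_App rtr_beta_Abs)

lemma par_beta_lift [simp]: "t \<Rightarrow>\<^sub>p t' \<Longrightarrow> lift t n \<Rightarrow>\<^sub>p lift t' n"
  by (induct t arbitrary: t' n) fastforce+

lemma par_beta_subst: "s \<Rightarrow>\<^sub>p s' \<Longrightarrow> t \<Rightarrow>\<^sub>p t' \<Longrightarrow> subst t s n \<Rightarrow>\<^sub>p subst t' s' n"
  apply (induct t arbitrary: s s' t' n)
    apply (simp add: subst_Var)
   apply (erule par_beta_cases)
    apply simp
   apply (simp add: subst_subst [symmetric])
   apply (fastforce intro!: par_beta_lift)
  apply fastforce
  done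

lemma par_diamond: "s \<Rightarrow>\<^sub>p t1 \<Longrightarrow> s \<Rightarrow>\<^sub>p t2 \<Longrightarrow> \<exists>u. t1 \<Rightarrow>\<^sub>p u \<and> t2 \<Rightarrow>\<^sub>p u"
proof (induct arbitrary: t2 rule: par_beta.induct)
  case (var n) then show ?case by auto
next
  case (abs s t) then show ?case by blast
next
  case (app s s' t t')
  then show ?case by (blast intro!: par_beta_subst)
next
  case (beta s s' t t')
  then show ?case by (blast intro!: par_beta_subst)
qed

lemma par_strip: "par_beta\<^sup>*\<^sup>* s t1 \<Longrightarrow> s \<Rightarrow>\<^sub>p t2 \<Longrightarrow> \<exists>u. t1 \<Rightarrow>\<^sub>p u \<and> par_beta\<^sup>*\<^sup>* t2 u"
proof (induct arbitrary: t2 rule: rtranclp_induct)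
  case base then show ?case by auto
next
  case (step y z)
  then obtain u where u: "y \<Rightarrow>\<^sub>p u" "par_beta\<^sup>*\<^sup>* t2 u" by blast
  from par_diamond[OF step(2) u(1)] obtain v where "z \<Rightarrow>\<^sub>p v" "u \<Rightarrow>\<^sub>p v" by blast
  with u show ?case by (meson rtranclp.rtrancl_into_rtrancl)
qed

lemma par_confl0: "par_beta\<^sup>*\<^sup>* s t2 \<Longrightarrow> par_beta\<^sup>*\<^sup>* s t1 \<Longrightarrow> \<exists>u. par_beta\<^sup>*\<^sup>* t1 u \<and> par_beta\<^sup>*\<^sup>* t2 u"
proof (induct arbitrary: t1 rule: rtranclp_induct)
  case base then show ?case by auto
next
  case (step y z)
  then obtain u where u: "par_beta\<^sup>*\<^sup>* t1 u" "par_beta\<^sup>*\<^sup>* y u" by blast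
  from par_strip[OF u(2) step(2)] obtain v where "u \<Rightarrow>\<^sub>p v" "par_beta\<^sup>*\<^sup>* z v" by blast
  with u show ?case by (meson rtranclp.rtrancl_into_rtrancl)
qed

lemma par_confl: "par_beta\<^sup>*\<^sup>* s t1 \<Longrightarrow> par_beta\<^sup>*\<^sup>* s t2 \<Longrightarrow> \<exists>u. par_beta\<^sup>*\<^sup>* t1 u \<and> par_beta\<^sup>*\<^sup>* t2 u"
  using par_confl0 by blast

lemma beta_rtr_par: "beta\<^sup>*\<^sup>* s t \<Longrightarrow> par_beta\<^sup>*\<^sup>* s t"
  by (induct rule: rtranclp_induct) (auto intro: rtranclp.rtrancl_into_rtrancl beta_subset_par_beta)

lemma par_rtr_beta: "par_beta\<^sup>*\<^sup>* s t \<Longrightarrow> beta\<^sup>*\<^sup>* s t"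
  by (induct rule: rtranclp_induct) (auto dest: par_beta_subset_beta)

lemma beta_confl: "beta\<^sup>*\<^sup>* s t1 \<Longrightarrow> beta\<^sup>*\<^sup>* s t2 \<Longrightarrow> \<exists>u. beta\<^sup>*\<^sup>* t1 u \<and> beta\<^sup>*\<^sup>* t2 u"
  by (meson beta_rtr_par par_confl par_rtr_beta)

lemma beta_eq_join: "beta_eq a b \<Longrightarrow> \<exists>c. beta\<^sup>*\<^sup>* a c \<and> beta\<^sup>*\<^sup>* b c"
  unfolding beta_eq_def equivclp_def
proof (induct rule: rtranclp_induct)
  case base then show ?case by auto
next
  case (step y z)
  then obtain c where c: "beta\<^sup>*\<^sup>* a c" "beta\<^sup>*\<^sup>* y c" by blast
  from step(2) have "beta y z \<or> beta z y" by (simp add: symclp_def)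
  then show ?case
  proof
    assume "beta y z"
    with beta_confl[OF c(2), of z] c show ?thesis by (meson r_into_rtranclp rtranclp_trans)
  next
    assume "beta z y"
    with c show ?thesis by (meson converse_rtranclp_into_rtranclp)
  qed
qed


primrec apps :: "dB \<Rightarrow> dB list \<Rightarrow> dB" where
  "apps t [] = t"
| "apps t (u # us) = apps (App t u) us"

declare apps.simps(2)[simp del]

lemma apps_App [simp]: "apps (App t u) us = apps t (u # us)"
  by (simp add: apps.simps(2))

lemma apps_single [simp]: "apps t [u] = App t u"
  by (simp add: apps.simps(2))

lemma apps_append: "apps t (us @ vs) = apps (apps t us) vs"
  by (induct us arbitrary: t) (auto simp: apps.simps(2) simp del: apps_App)

lemma apps_snoc: "apps t (us @ [u]) = App (apps t us) u"
  by (simp add: apps_append apps.simps(2) del: apps_App)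

inductive wh :: "dB \<Rightarrow> dB \<Rightarrow> bool" where
  whb: "wh (App (Abs s) t) (subst s t 0)"
| whl: "wh s s' \<Longrightarrow> wh (App s u) (App s' u)"

abbreviation whs where "whs \<equiv> wh\<^sup>*\<^sup>*"

lemma wh_beta: "wh s t \<Longrightarrow> beta s t"
  by (induct rule: wh.induct) (auto intro: beta.intros)

lemma whs_beta: "whs s t \<Longrightarrow> beta\<^sup>*\<^sup>* s t"
  by (induct rule: rtranclp_induct) (auto intro: rtranclp.rtrancl_into_rtrancl wh_beta)

lemma wh_apps: "wh s s' \<Longrightarrow> wh (apps s us) (apps s' us)"
  by (induct us arbitrary: s s') (auto intro: whl simp: apps.simps(2) simp del: apps_App)

lemma whs_apps: "whs s s' \<Longrightarrow> whs (apps s us) (apps s' us)"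
  by (induct rule: rtranclp_induct) (auto intro: rtranclp.rtrancl_into_rtrancl wh_apps)

lemma whs_App: "whs s s' \<Longrightarrow> whs (App s u) (App s' u)"
  using whs_apps[of s s' "[u]"] by (simp add: apps.simps(2) del: apps_App)

lemma wback: "whs (apps (subst s t 0) us) R \<Longrightarrow> whs (apps (Abs s) (t # us)) R"
  using wh_apps[OF whb, of s t us]
  by (simp add: converse_rtranclp_into_rtranclp apps.simps(2) del: apps_App)

inductive_cases wh_AbsE[elim!]: "wh (Abs s) u"
inductive_cases wh_VarE[elim!]: "wh (Var i) u"
inductive_cases wh_AbsAppE: "wh (App (Abs s) t) u"

lemma wh_App_nonabs: "wh (App s u) N \<Longrightarrow> (\<forall>b. s \<noteq> Abs b) \<Longrightarrow> \<exists>s2. N = App s2 u \<and> wh s s2"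
  by (erule wh.cases) auto

lemma wh_notabs: "wh s s' \<Longrightarrow> (\<forall>b. s \<noteq> Abs b)"
  by (erule wh.cases) auto

lemma wh_det: "wh M N1 \<Longrightarrow> wh M N2 \<Longrightarrow> N1 = N2"
proof (induct arbitrary: N2 rule: wh.induct)
  case (whb s t) 
  from whb show ?case by (rule wh_AbsAppE) auto
next
  case (whl s s' u) 
  from wh_App_nonabs[OF whl(3) wh_notabs[OF whl(1)]] obtain s2 where "N2 = App s2 u" "wh s s2" by blast
  with whl(2) show ?case by simp
qed

lemma wh_VarApp: "\<not> wh (App (Var i) t) u"
proof
  assume "wh (App (Var i) t) u"
  from wh_App_nonabs[OF this] obtain s2 where "wh (Var i) s2" by auto
  then show False by auto
qed

lemma whs_Var_unique: "whs M (App (Var i) A) \<Longrightarrow> whs M (App (Var i) B) \<Longrightarrow> A = B"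
proof (induct arbitrary: B rule: converse_rtranclp_induct)
  case base then show ?case
    by (auto elim: converse_rtranclpE simp: wh_VarApp)
next
  case (step y z)
  from step(4) show ?case
  proof (cases rule: converse_rtranclpE)
    case base with step(1) show ?thesis by (simp add: wh_VarApp)
  next
    case (step z')
    with wh_det[OF \<open>wh y z\<close>] have "z' = z" by simp
    with step show ?thesis using \<open>\<And>B. whs z (App (Var i) B) \<Longrightarrow> A = B\<close> by simp
  qed
qed

lemma K1: "wh M M' \<Longrightarrow> M \<Rightarrow>\<^sub>p N \<Longrightarrow> \<exists>N'. whs N N' \<and> M' \<Rightarrow>\<^sub>p N'"
proof (induct arbitrary: N rule: wh.induct)
  case (whb s t)
  from whb have "App (Abs s) t \<Rightarrow>\<^sub>p N" .
  then show ?case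
  proof (rule par_beta_cases(4))
    fix s0 t' assume a: "Abs s \<Rightarrow>\<^sub>p s0" "t \<Rightarrow>\<^sub>p t'" "N = App s0 t'"
    then obtain s' where "s0 = Abs s'" "s \<Rightarrow>\<^sub>p s'" by blast
    with a have "wh N (subst s' t' 0)" by (simp add: wh.whb)
    with \<open>s \<Rightarrow>\<^sub>p s'\<close> a show ?thesis by (blast intro: par_beta_subst)
  next
    fix s1 s' t' assume "Abs s = Abs s1" "s1 \<Rightarrow>\<^sub>p s'" "t \<Rightarrow>\<^sub>p t'" "N = subst s' t' 0"
    then show ?thesis by (blast intro: par_beta_subst)
  qed
next
  case (whl s s' u)
  from whl(3) show ?case
  proof (rule par_beta_cases(4))
    fix s0 u0 assume a: "s \<Rightarrow>\<^sub>p s0" "u \<Rightarrow>\<^sub>p u0" "N = App s0 u0"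
    with whl(2) obtain N' where "whs s0 N'" "s' \<Rightarrow>\<^sub>p N'" by blast
    with a show ?thesis by (auto intro: whs_App)
  next
    fix s1 s2 t' assume "s = Abs s1"
    with wh_notabs[OF whl(1)] show ?thesis by simp
  qed
qed

lemma K: "whs M (App (Var i) M1) \<Longrightarrow> M \<Rightarrow>\<^sub>p N \<Longrightarrow> \<exists>N1. whs N (App (Var i) N1) \<and> M1 \<Rightarrow>\<^sub>p N1"
proof (induct arbitrary: N rule: converse_rtranclp_induct)
  case base then show ?case by auto
next
  case (step y z)
  from K1[OF step(1) step(4)] obtain N' where "whs N N'" "z \<Rightarrow>\<^sub>p N'" by blast
  with step(3) show ?case by (meson rtranclp_trans)
qed


definition Bod2 :: "dB set" where
"Bod2 = {(Abs (Abs (App (App (Var 1) (Var 0)) (App (App (App (Var 2) (Var 2)) (Var 1)) (Var 0))))),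
 (Abs (App (Abs (Abs (App (App (Var 2) (Var 0)) (App (Var 1) (Var 0))))) (App (App (Var 1) (Var 1)) (Var 0)))),
 (App (Abs (Abs (Abs (App (App (Var 1) (Var 0)) (App (App (Var 2) (Var 1)) (Var 0)))))) (App (Var 0) (Var 0))),
 (App (Abs (Abs (App (Abs (Abs (App (App (Var 2) (Var 0)) (App (Var 1) (Var 0))))) (App (Var 1) (Var 0))))) (App (Var 0) (Var 0))),
 (Abs (App (App combS (Var 0)) (App (App (Var 1) (Var 1)) (Var 0)))),
 (App (Abs (Abs (App (App combS (Var 0)) (App (Var 1) (Var 0))))) (App (Var 0) (Var 0))),
 (App (App combS combS) (App (Var 0) (Var 0)))}"

definition Bod1 :: "dB set" where
"Bod1 = {(Abs (App (Var 0) (App (App (Var 1) (Var 1)) (Var 0)))),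
 (App (Abs (Abs (App (Var 0) (App (Var 1) (Var 0))))) (App (Var 0) (Var 0))),
 (Abs (App (App combI (Var 0)) (App (App (Var 1) (Var 1)) (Var 0)))),
 (App (Abs (Abs (App (App combI (Var 0)) (App (Var 1) (Var 0))))) (App (Var 0) (Var 0))),
 (App (App combS combI) (App (Var 0) (Var 0)))}"

definition Bod0 :: "dB set" where
"Bod0 = {App (Var 1) (App (Var 0) (Var 0)), App (App combI (Var 1)) (App (Var 0) (Var 0))}"

lemma bod0_par: "a \<in> Bod0 \<Longrightarrow> a \<Rightarrow>\<^sub>p a' \<Longrightarrow> a' \<in> Bod0"
  unfolding Bod0_def combI_def by auto

lemma bod1_par: "a \<in> Bod1 \<Longrightarrow> a \<Rightarrow>\<^sub>p a' \<Longrightarrow> a' \<in> Bod1"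
  unfolding Bod1_def combI_def combS_def by auto

lemma bod2_par: "a \<in> Bod2 \<Longrightarrow> a \<Rightarrow>\<^sub>p a' \<Longrightarrow> a' \<in> Bod2"
  unfolding Bod2_def combS_def by auto


lemma lift00: "lift (lift t 0) 0 = lift (lift t 0) 1"
  using lift_lift[of 0 0 t] by simp

lemma S_red: "whs (apps combS (a#b#c#us)) (apps a (c # App b c # us))"
  unfolding combS_def
  apply (rule wback, simp)+
  apply (simp add: lift00)
  done

lemma I_red: "whs (apps combI (a#us)) (apps a us)"
  unfolding combI_def
  apply (rule wback, simp)
  done

lemma B_red: "whs (apps combB (a#b#c#us)) (apps a (App b c # us))"
  unfolding combB_def
  apply (rule wback, simp)+
  apply (simp add: lift00)
  done


lemma lift_combS[simp]: "lift combS k = combS" by (simp add: combS_def)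
lemma subst_combS[simp]: "subst combS s k = combS" by (simp add: combS_def)
lemma lift_combI[simp]: "lift combI k = combI" by (simp add: combI_def)
lemma subst_combI[simp]: "subst combI s k = combI" by (simp add: combI_def)


lemma pair2: 
  assumes a: "a \<in> Bod2" and cl: "\<And>k. lift W k = W" "\<And>s k. subst W s k = W"
  shows "whs (apps (subst a W 0) (t1#t2#rest)) (apps t1 (t2 # App (App (App W W) t1) t2 # rest))"
  using a unfolding Bod2_def
  apply (simp add: cl)
  apply (elim disjE)
  apply (simp_all add: cl)
  apply (((rule wback | rule rtranclp_trans[OF S_red] | rule rtranclp_trans[OF I_red]), (simp add: lift00 cl)?)+)+
  done

lemma pair1: 
  assumes a: "a \<in> Bod1" and cl: "\<And>k. lift W k = W" "\<And>s k. subst W s k = W"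
  shows "whs (apps (subst a W 0) (t1#rest)) (apps t1 (App (App W W) t1 # rest))"
  using a unfolding Bod1_def
  apply (simp add: cl)
  apply (elim disjE)
  apply (simp_all add: cl)
  apply (((rule wback | rule rtranclp_trans[OF S_red] | rule rtranclp_trans[OF I_red]), (simp add: lift00 cl)?)+)+
  done

lemma chain: "whs (apps combS (combS # apps G (replicate j combS) # replicate i combS @ [combI, Var 0]))
   (App (Var 0) (apps G (replicate (j+i) combS @ [combI, Var 0])))"
proof (induct i arbitrary: j)
  case 0
  show ?case
    apply simp
    apply (rule rtranclp_trans[OF S_red])
    apply (rule rtranclp_trans[OF S_red])
    apply (rule rtranclp_trans[OF I_red])
    apply (simp add: apps_append apps.simps(2) del: apps_App)
    done
next
  case (Suc i)
  have e: "App (apps G (replicate j combS)) combS = apps G (replicate (Suc j) combS)"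
    by (simp add: apps_snoc[symmetric] replicate_append_same[symmetric] del: apps_App)
  show ?case
    apply simp
    apply (rule rtranclp_trans[OF S_red])
    using Suc[of "Suc j"] by (simp add: e)
qed

lemma V2: 
  assumes a: "a \<in> Bod2" and cl: "\<And>k. lift W k = W" "\<And>s k. subst W s k = W"
  shows "whs (apps (subst a W 0) (replicate k combS @ [combI, Var 0]))
           (App (Var 0) (apps (App W W) (replicate k combS @ [combI, Var 0])))"
proof (cases k)
  case 0
  then show ?thesis
    apply simp
    apply (rule rtranclp_trans[OF pair2[OF a cl]])
    apply (rule rtranclp_trans[OF I_red])
    by (simp add: apps.simps(2) del: apps_App)
next
  case (Suc k1)
  show ?thesis
  proof (cases k1)
    case 0
    with Suc show ?thesis
      apply simp
      apply (rule rtranclp_trans[OF pair2[OF a cl]])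
      apply (rule rtranclp_trans[OF S_red])
      apply (rule rtranclp_trans[OF I_red])
      by (simp add: apps.simps(2) del: apps_App)
  next
    case (Suc j)
    have "whs (apps combS (combS # apps (App W W) (replicate 2 combS) # replicate j combS @ [combI, Var 0]))
     (App (Var 0) (apps (App W W) (replicate (2+j) combS @ [combI, Var 0])))" by (rule chain)
    with Suc \<open>k = Suc k1\<close> show ?thesis
      apply simp
      apply (rule rtranclp_trans[OF pair2[OF a cl]])
      by (simp add: numeral_2_eq_2 apps.simps(2) del: apps_App)
  qed
qed

lemma V1: 
  assumes a: "a \<in> Bod1" and cl: "\<And>k. lift W k = W" "\<And>s k. subst W s k = W"
  shows "whs (apps (subst a W 0) [Var 0]) (App (Var 0) (App (App W W) (Var 0)))"
  using pair1[OF a cl, of "Var 0" "[]"] by simp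

lemma I_app: "whs (App combI a) a"
  using I_red[of a "[]"] by simp

lemma V0:
  assumes "a \<in> Bod0" "b \<in> Bod0"
  shows "whs (subst a (Abs b) 0) (App (Var 0) (App (Abs b) (Abs b)))"
  using assms unfolding Bod0_def
  apply (elim insertE)
  apply simp_all
  by (auto intro: whs_App I_app)


lemma closed2: "b \<in> Bod2 \<Longrightarrow> lift (Abs b) k = Abs b \<and> subst (Abs b) s k = Abs b"
  unfolding Bod2_def by auto

lemma closed1: "b \<in> Bod1 \<Longrightarrow> lift (Abs b) k = Abs b \<and> subst (Abs b) s k = Abs b"
  unfolding Bod1_def by auto

lemma par_apps_inv: "apps h us \<Rightarrow>\<^sub>p Q \<Longrightarrow> (\<forall>b. h \<noteq> Abs b) \<Longrightarrow>
   \<exists>h' us'. Q = apps h' us' \<and> h \<Rightarrow>\<^sub>p h' \<and> list_all2 par_beta us us'"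
proof (induct us arbitrary: h)
  case Nil then show ?case by auto
next
  case (Cons u us)
  from Cons(2) have "apps (App h u) us \<Rightarrow>\<^sub>p Q" by (simp add: apps.simps(2) del: apps_App)
  from Cons(1)[OF this] obtain h'' us'' where h'': "Q = apps h'' us''" "App h u \<Rightarrow>\<^sub>p h''" 
     "list_all2 par_beta us us''" by auto
  from h''(2) obtain h' u' where "h'' = App h' u'" "h \<Rightarrow>\<^sub>p h'" "u \<Rightarrow>\<^sub>p u'"
    using Cons(3) by (auto elim!: par_beta_cases(4))
  with h'' show ?case
    by (intro exI[of _ h'] exI[of _ "u' # us''"]) (simp add: apps.simps(2) del: apps_App)
qed

lemma rigid_par: "t \<in> {combS, combI, Var 0} \<Longrightarrow> t \<Rightarrow>\<^sub>p t' \<Longrightarrow> t' = t"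
  unfolding combS_def combI_def by auto

lemma rigidS: "combS \<Rightarrow>\<^sub>p t' \<Longrightarrow> t' = combS" using rigid_par by blast
lemma rigidI: "combI \<Rightarrow>\<^sub>p t' \<Longrightarrow> t' = combI" using rigid_par by blast

lemma rigid_list: "list_all2 par_beta us us' \<Longrightarrow> set us \<subseteq> {combS, combI, Var 0} \<Longrightarrow> us' = us"
  by (induct rule: list_all2_induct) (auto dest: rigidS rigidI)

lemma head_par: "App (Abs a) (Abs b) \<Rightarrow>\<^sub>p h' \<Longrightarrow>
  \<exists>a' b'. a \<Rightarrow>\<^sub>p a' \<and> b \<Rightarrow>\<^sub>p b' \<and> (h' = App (Abs a') (Abs b') \<or> h' = subst a' (Abs b') 0)"
  by (erule par_beta_cases(4)) auto

definition Lit :: "nat \<Rightarrow> dB set" where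
"Lit n = (if n = 0 then {App (Abs a) (Abs b) | a b. a \<in> Bod0 \<and> b \<in> Bod0}
  else if n = 1 then {apps (Abs a) [Abs b, Var 0] | a b. a \<in> Bod1 \<and> b \<in> Bod1}
  else {apps (Abs a) (Abs b # replicate (n-2) combS @ [combI, Var 0]) | a b. a \<in> Bod2 \<and> b \<in> Bod2})"

lemma litC_gen:
  assumes L: "L = apps (App (Abs a) (Abs b)) ts" and r: "set ts \<subseteq> {combS, combI, Var 0}"
    and Q: "L \<Rightarrow>\<^sub>p Q"
    and V: "\<And>a' b'. a \<Rightarrow>\<^sub>p a' \<Longrightarrow> b \<Rightarrow>\<^sub>p b' \<Longrightarrow> P b' \<and> whs (apps (subst a' (Abs b') 0) ts) (App (Var 0) (apps (App (Abs b') (Abs b')) ts))"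
  shows "\<exists>b'. P b' \<and> whs Q (App (Var 0) (apps (App (Abs b') (Abs b')) ts))"
proof -
  from par_apps_inv[OF Q[unfolded L]] obtain h' us' where
    h': "Q = apps h' us'" "App (Abs a) (Abs b) \<Rightarrow>\<^sub>p h'" "list_all2 par_beta ts us'" by auto
  from rigid_list[OF h'(3) r] h'(1) have Qe: "Q = apps h' ts" by simp
  from head_par[OF h'(2)] obtain a' b' where ab: "a \<Rightarrow>\<^sub>p a'" "b \<Rightarrow>\<^sub>p b'"
    "h' = App (Abs a') (Abs b') \<or> h' = subst a' (Abs b') 0" by blast
  from V[OF ab(1,2)] have v: "P b'" "whs (apps (subst a' (Abs b') 0) ts) (App (Var 0) (apps (App (Abs b') (Abs b')) ts))" by auto
  from ab(3) show ?thesis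
  proof
    assume "h' = App (Abs a') (Abs b')"
    with Qe have "Q = apps (Abs a') (Abs b' # ts)" by simp
    with v show ?thesis by (meson wback)
  next
    assume "h' = subst a' (Abs b') 0"
    with Qe v show ?thesis by blast
  qed
qed

lemma litC: "L \<in> Lit n \<Longrightarrow> L \<Rightarrow>\<^sub>p Q \<Longrightarrow> \<exists>L'. whs Q (App (Var 0) L') \<and> L' \<in> Lit n"
proof -
  assume L: "L \<in> Lit n" and Q: "L \<Rightarrow>\<^sub>p Q"
  consider (z) "n = 0" | (o) "n = 1" | (t) "n \<ge> 2" by linarith
  then show ?thesis
  proof cases
    case z
    with L obtain a b where ab: "L = App (Abs a) (Abs b)" "a \<in> Bod0" "b \<in> Bod0" by (auto simp: Lit_def)
    from litC_gen[of L a b "[]" Q "\<lambda>b'. b' \<in> Bod0"] ab Q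
    obtain b' where "b' \<in> Bod0" "whs Q (App (Var 0) (App (Abs b') (Abs b')))"
      using V0 bod0_par by fastforce
    with z show ?thesis by (auto simp: Lit_def)
  next
    case o
    with L obtain a b where ab: "L = apps (App (Abs a) (Abs b)) [Var 0]" "a \<in> Bod1" "b \<in> Bod1" by (auto simp: Lit_def apps.simps(2) simp del: apps_App)
    have "\<exists>b'. b' \<in> Bod1 \<and> whs Q (App (Var 0) (apps (App (Abs b') (Abs b')) [Var 0]))"
    proof (rule litC_gen[OF ab(1) _ Q])
      fix a' b' assume "a \<Rightarrow>\<^sub>p a'" "b \<Rightarrow>\<^sub>p b'"
      with ab bod1_par have "a' \<in> Bod1" "b' \<in> Bod1" by blast+
      with V1[OF \<open>a' \<in> Bod1\<close>] closed1[OF \<open>b' \<in> Bod1\<close>]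
      show "b' \<in> Bod1 \<and> whs (apps (subst a' (Abs b') 0) [Var 0]) (App (Var 0) (apps (App (Abs b') (Abs b')) [Var 0]))"
        by simp
    qed simp
    with o show ?thesis by (auto simp: Lit_def apps.simps(2) simp del: apps_App)
  next
    case t
    define ts where "ts = replicate (n-2) combS @ [combI, Var 0]"
    with L t obtain a b where ab: "L = apps (App (Abs a) (Abs b)) ts" "a \<in> Bod2" "b \<in> Bod2" by (auto simp: Lit_def apps.simps(2) simp del: apps_App)
    have "\<exists>b'. b' \<in> Bod2 \<and> whs Q (App (Var 0) (apps (App (Abs b') (Abs b')) ts))"
    proof (rule litC_gen[OF ab(1) _ Q])
      fix a' b' assume "a \<Rightarrow>\<^sub>p a'" "b \<Rightarrow>\<^sub>p b'"
      with ab bod2_par have "a' \<in> Bod2" "b' \<in> Bod2" by blast+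
      with V2[OF \<open>a' \<in> Bod2\<close>, of "Abs b'" "n-2"] closed2[OF \<open>b' \<in> Bod2\<close>]
      show "b' \<in> Bod2 \<and> whs (apps (subst a' (Abs b') 0) ts) (App (Var 0) (apps (App (Abs b') (Abs b')) ts))"
        by (simp add: ts_def)
    qed (auto simp: ts_def)
    with t show ?thesis unfolding ts_def by (auto simp: Lit_def)
  qed
qed


primrec nargs :: "dB \<Rightarrow> nat" where
  "nargs (Var i) = 0"
| "nargs (Abs s) = 0"
| "nargs (App s t) = Suc (nargs s)"

lemma nargs_apps: "nargs (apps t us) = nargs t + length us"
  by (induct us arbitrary: t) (auto simp: apps.simps(2) simp del: apps_App)

lemma nargs_Lit: "L \<in> Lit n \<Longrightarrow> nargs L = Suc n"
  unfolding Lit_def by (auto simp: nargs_apps simp del: apps_App split: if_splits)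

lemma lit_disj: "L \<in> Lit n \<Longrightarrow> L \<in> Lit m \<Longrightarrow> n = m"
proof -
  assume a: "L \<in> Lit n" and b: "L \<in> Lit m"
  have "Suc n = Suc m" using nargs_Lit[OF a] nargs_Lit[OF b] by simp
  then show "n = m" by simp
qed

inductive Ev :: "nat \<Rightarrow> dB \<Rightarrow> bool" where
  lit: "R \<in> Lit n \<Longrightarrow> Ev n R"
| step: "whs R (App (Var 0) R1) \<Longrightarrow> Ev n R1 \<Longrightarrow> Ev n R"

lemma Ev_par: "Ev n R \<Longrightarrow> R \<Rightarrow>\<^sub>p R' \<Longrightarrow> Ev n R'"
proof (induct arbitrary: R' rule: Ev.induct)
  case (lit R n)
  from litC[OF lit] obtain L' where "whs R' (App (Var 0) L')" "L' \<in> Lit n" by blast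
  then show ?case by (blast intro: Ev.intros)
next
  case (step R R1 n)
  from K[OF step(1) step(4)] obtain N1 where "whs R' (App (Var 0) N1)" "R1 \<Rightarrow>\<^sub>p N1" by blast
  with step(3) show ?case by (blast intro: Ev.intros)
qed

lemma Ev_red: "beta\<^sup>*\<^sup>* L R \<Longrightarrow> L \<in> Lit n \<Longrightarrow> Ev n R"
  by (induct rule: rtranclp_induct) (auto intro: Ev.lit Ev_par beta_subset_par_beta)

lemma Ev_lit_unique: "Ev m L \<Longrightarrow> L \<in> Lit n \<Longrightarrow> n = m"
proof (induct rule: Ev.induct)
  case (lit R m) then show ?case using lit_disj by blast
next
  case (step R R1 m)
  from litC[OF step(4) par_beta_refl] obtain L' where "whs R (App (Var 0) L')" "L' \<in> Lit n" by blast
  with whs_Var_unique[OF step(1)] step(3) show ?case by blast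
qed

lemma Ev_unique: "Ev n R \<Longrightarrow> Ev m R \<Longrightarrow> n = m"
proof (induct arbitrary: m rule: Ev.induct)
  case (lit R n) then show ?case using Ev_lit_unique by blast
next
  case (step R R1 n)
  from step(4) show ?case
  proof (cases rule: Ev.cases)
    case lit then show ?thesis using Ev_lit_unique[OF Ev.step[OF step(1,2)]] by simp
  next
    case (step R1')
    with whs_Var_unique[OF \<open>whs R (App (Var 0) R1)\<close>] \<open>\<And>m. Ev m R1 \<Longrightarrow> n = m\<close> show ?thesis by blast
  qed
qed

lemma scott_pre_apps: "scott_pre n = apps (App combB combY0) (replicate n combS)"
proof (induct n)
  case 0 then show ?case by simp
next
  case (Suc n)
  have "replicate (Suc n) combS = replicate n combS @ [combS]" by (simp add: replicate_append_same)
  then show ?case using Suc by (simp only: scott_pre.simps apps_snoc)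
qed

lemma scottU_x: "App (scottU n) (Var 0) = apps combB (combY0 # replicate n combS @ [combI, Var 0])"
  unfolding scottU_def scott_pre_apps
  by (simp add: apps_append apps.simps(2) del: apps_App)

lemma start: "\<exists>L. whs (App (scottU n) (Var 0)) L \<and> L \<in> Lit n"
proof -
  consider (z) "n = 0" | (o) "n = 1" | (t) k where "n = Suc (Suc k)" by (metis One_nat_def not0_implies_Suc)
  then show ?thesis
  proof cases
    case z
    have "whs (App (scottU n) (Var 0)) (App (Abs (App (App combI (Var 1)) (App (Var 0) (Var 0)))) (Abs (App (App combI (Var 1)) (App (Var 0) (Var 0)))))"
      unfolding scottU_x z
      apply simp
      apply (rule rtranclp_trans[OF B_red])
      unfolding combY0_def
      apply (rule wback)
      by simp
    moreover have "App (Abs (App (App combI (Var 1)) (App (Var 0) (Var 0)))) (Abs (App (App combI (Var 1)) (App (Var 0) (Var 0)))) \<in> Lit n"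
    proof -
      have b: "App (App combI (Var 1)) (App (Var 0) (Var 0)) \<in> Bod0" by (simp add: Bod0_def)
      show ?thesis unfolding Lit_def using z b by auto
    qed
    ultimately show ?thesis by blast
  next
    case o
    let ?W = "Abs (App (App combS combI) (App (Var 0) (Var 0)))"
    have "whs (App (scottU n) (Var 0)) (App (App ?W ?W) (Var 0))"
      unfolding scottU_x o
      apply simp
      apply (rule rtranclp_trans[OF B_red])
      unfolding combY0_def
      apply (rule wback)
      by simp
    moreover have "App (App ?W ?W) (Var 0) \<in> Lit n"
    proof -
      have b: "App (App combS combI) (App (Var 0) (Var 0)) \<in> Bod1" by (simp add: Bod1_def)
      have e: "(n = 0) = False" "(n = 1) = True" using o by auto
      have "App (App ?W ?W) (Var 0) = apps ?W [?W, Var 0]"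
        by (simp add: apps.simps(2) del: apps_App)
      then show ?thesis unfolding Lit_def e if_False if_True using b by blast
    qed
    ultimately show ?thesis by blast
  next
    case t
    let ?W = "Abs (App (App combS combS) (App (Var 0) (Var 0)))"
    have "whs (App (scottU n) (Var 0)) (apps ?W (?W # replicate k combS @ [combI, Var 0]))"
      unfolding scottU_x t
      apply simp
      apply (rule rtranclp_trans[OF B_red])
      unfolding combY0_def
      apply (rule wback)
      by simp
    moreover have "apps ?W (?W # replicate k combS @ [combI, Var 0]) \<in> Lit n"
    proof -
      have b: "App (App combS combS) (App (Var 0) (Var 0)) \<in> Bod2" by (simp add: Bod2_def)
      have e: "(n = 0) = False" "(n = 1) = False" "n - 2 = k" using t by auto
      show ?thesis unfolding Lit_def e if_False using b by blast
    qed
    ultimately show ?thesis by blast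
  qed
qed

theorem corollary4p17:
  fixes n m :: nat
  assumes "n \<noteq> m"
  shows "\<not> beta_eq (scottU n) (scottU m)"
proof
  assume "beta_eq (scottU n) (scottU m)"
  from beta_eq_join[OF this] obtain c where c: "beta\<^sup>*\<^sup>* (scottU n) c" "beta\<^sup>*\<^sup>* (scottU m) c" by blast
  have cn: "beta\<^sup>*\<^sup>* (App (scottU n) (Var 0)) (App c (Var 0))" using c(1) by (simp add: rtr_beta_App)
  have cm: "beta\<^sup>*\<^sup>* (App (scottU m) (Var 0)) (App c (Var 0))" using c(2) by (simp add: rtr_beta_App)
  obtain Ln where Ln: "whs (App (scottU n) (Var 0)) Ln" "Ln \<in> Lit n" using start by blast
  obtain Lm where Lm: "whs (App (scottU m) (Var 0)) Lm" "Lm \<in> Lit m" using start by blast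
  from beta_confl[OF whs_beta[OF Ln(1)] cn] obtain d1 where d1: "beta\<^sup>*\<^sup>* Ln d1" "beta\<^sup>*\<^sup>* (App c (Var 0)) d1" by blast
  from beta_confl[OF whs_beta[OF Lm(1)] cm] obtain d2 where d2: "beta\<^sup>*\<^sup>* Lm d2" "beta\<^sup>*\<^sup>* (App c (Var 0)) d2" by blast
  from beta_confl[OF d1(2) d2(2)] obtain e where e: "beta\<^sup>*\<^sup>* d1 e" "beta\<^sup>*\<^sup>* d2 e" by blast
  have "Ev n e" using Ev_red[OF rtranclp_trans[OF d1(1) e(1)] Ln(2)] .
  moreover have "Ev m e" using Ev_red[OF rtranclp_trans[OF d2(1) e(2)] Lm(2)] .
  ultimately have "n = m" by (rule Ev_unique)
  with assms show False by simp
qed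


end
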